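(* Let $\Lambda$ be a row-finite $2$-graph with no sources. Suppose that for every vertex $v\in\Lambda^0$ there is a vertex $u\in\Lambda^0$ with $v\Lambda u\neq\emptyset$ at which there is an aperiodic quartet (that is, an $(a,b)$-aperiodic quartet for some positive integers $a,b$). Then $\Lambda$ is aperiodic.
   Context: A $k$-graph is a countable category $\Lambda$ with a functor $d:\Lambda\to\mathbb{N}^k$ satisfying the factorization property: whenever $d(\lambda)=m+n$ there are unique $\mu,\nu$ with $\lambda=\mu\nu$, $d(\mu)=m$, $d(\nu)=n$. $\Lambda^n=d^{-1}(n)$, $\Lambda^0$ the vertices, $r,s$ range and source, $v\Lambda=\{\lambda:r(\lambda)=v\}$, $v\Lambda^n w=\{\lambda: r(\lambda)=v,d(\lambda)=n,s(\lambda)=w\}$, $v\Lambda w$ the union over $n$. Row-finite: each $v\Lambda^n$ finite; no sources: $v\Lambda^{e_i}\ne\emptyset$ for all $v,i$. For $0\le m\le n\le d(\lambda)$, $\lambda(m,n)$ is the unique path with $\lambda=\lambda'\lambda(m,n)\lambda''$, $d(\lambda')=m$, $d(\lambda(m,n))=n-m$. $\Lambda$ has no local periodicity at $v$ if for each $m\neq n\in\mathbb{N}^k$ there is $\lambda\in v\Lambda$ with $d(\lambda)\ge m\vee n$ and $\lambda(m,m+d(\lambda)-(m\vee n))\neq\lambda(n,n+d(\lambda)-(m\vee n))$; $\Lambda$ is aperiodic if it has no local periodicity at every vertex. For positive integers $a,b$, an $(a,b)$-aperiodic quartet at $u$ is $(\alpha_1,\alpha_2,\beta_1,\beta_2)$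 with $\alpha_1\neq\alpha_2$ in $u\Lambda^{ae_1}u$, $\beta_1\neq\beta_2$ in $u\Lambda^{be_2}u$, and $\beta_2\alpha_1=\alpha_1\beta_2$, $\beta_2\alpha_2=\alpha_2\beta_2$, $\beta_1\alpha_1=\alpha_2\beta_1$, $\beta_1\alpha_2=\alpha_1\beta_1$. *)

theory Defs
  imports Main "HOL-Library.Countable_Set"
begin

type_synonym deg = "nat \<times> nat"

definition dadd :: "deg \<Rightarrow> deg \<Rightarrow> deg" where
  "dadd m n = (fst m + fst n, snd m + snd n)"

definition dsub :: "deg \<Rightarrow> deg \<Rightarrow> deg" where
  "dsub m n = (fst m - fst n, snd m - snd n)"

definition dle :: "deg \<Rightarrow> deg \<Rightarrow> bool" where
  "dle m n \<longleftrightarrow> fst m \<le> fst n \<and> snd m \<le> snd n"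

definition djoin :: "deg \<Rightarrow> deg \<Rightarrow> deg" where
  "djoin m n = (max (fst m) (fst n), max (snd m) (snd n))"

definition e1 :: deg where "e1 = (1, 0)"
definition e2 :: deg where "e2 = (0, 1)"

text \<open>A 2-graph: a countable small category with object set V, morphism set P,
  range/source maps r s, composition cmp (cmp f g = "f g", defined when s f = r g),
  identities idt, and a degree functor d into N^2 with the factorization property.\<close>

definition two_graph ::
  "'v set \<Rightarrow> 'a set \<Rightarrow> ('a \<Rightarrow> 'v) \<Rightarrow> ('a \<Rightarrow> 'v) \<Rightarrow> ('a \<Rightarrow> 'a \<Rightarrow> 'a)
   \<Rightarrow> ('v \<Rightarrow> 'a) \<Rightarrow> ('a \<Rightarrow> deg) \<Rightarrow> bool" where
  "two_graph V P r s cmp idt d \<longleftrightarrow>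
     countable V \<and> countable P \<and>
     (\<forall>f\<in>P. r f \<in> V \<and> s f \<in> V) \<and>
     (\<forall>v\<in>V. idt v \<in> P \<and> r (idt v) = v \<and> s (idt v) = v) \<and>
     (\<forall>f\<in>P. \<forall>g\<in>P. s f = r g \<longrightarrow>
        cmp f g \<in> P \<and> r (cmp f g) = r f \<and> s (cmp f g) = s g) \<and>
     (\<forall>f\<in>P. \<forall>g\<in>P. \<forall>h\<in>P. s f = r g \<longrightarrow> s g = r h \<longrightarrow>
        cmp (cmp f g) h = cmp f (cmp g h)) \<and>
     (\<forall>f\<in>P. cmp (idt (r f)) f = f \<and> cmp f (idt (s f)) = f) \<and>
     (\<forall>v\<in>V. d (idt v) = (0, 0)) \<and>
     (\<forall>f\<in>P. \<forall>g\<in>P. s f = r g \<longrightarrow> d (cmp f g) = dadd (d f) (d g)) \<and>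
     (\<forall>f\<in>P. \<forall>m n. d f = dadd m n \<longrightarrow>
        (\<exists>!p. fst p \<in> P \<and> snd p \<in> P \<and> s (fst p) = r (snd p) \<and>
              f = cmp (fst p) (snd p) \<and> d (fst p) = m \<and> d (snd p) = n))"

definition row_finite ::
  "'v set \<Rightarrow> 'a set \<Rightarrow> ('a \<Rightarrow> 'v) \<Rightarrow> ('a \<Rightarrow> deg) \<Rightarrow> bool" where
  "row_finite V P r d \<longleftrightarrow> (\<forall>v\<in>V. \<forall>n. finite {f\<in>P. r f = v \<and> d f = n})"

definition no_sources ::
  "'v set \<Rightarrow> 'a set \<Rightarrow> ('a \<Rightarrow> 'v) \<Rightarrow> ('a \<Rightarrow> deg) \<Rightarrow> bool" where
  "no_sources V P r d \<longleftrightarrow>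
     (\<forall>v\<in>V. {f\<in>P. r f = v \<and> d f = e1} \<noteq> {} \<and> {f\<in>P. r f = v \<and> d f = e2} \<noteq> {})"

definition seg ::
  "'a set \<Rightarrow> ('a \<Rightarrow> 'v) \<Rightarrow> ('a \<Rightarrow> 'v) \<Rightarrow> ('a \<Rightarrow> 'a \<Rightarrow> 'a) \<Rightarrow> ('a \<Rightarrow> deg)
   \<Rightarrow> 'a \<Rightarrow> deg \<Rightarrow> deg \<Rightarrow> 'a" where
  "seg P r s cmp d f m n =
     (THE g. g \<in> P \<and> (\<exists>f1\<in>P. \<exists>f2\<in>P. s f1 = r g \<and> s g = r f2 \<and>
        f = cmp (cmp f1 g) f2 \<and> d f1 = m \<and> d g = dsub n m))"

definition no_local_periodicity_at ::
  "'a set \<Rightarrow> ('a \<Rightarrow> 'v) \<Rightarrow> ('a \<Rightarrow> 'v) \<Rightarrow> ('a \<Rightarrow> 'a \<Rightarrow> 'a) \<Rightarrow> ('a \<Rightarrow> deg) \<Rightarrow> 'v \<Rightarrow> bool" where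
  "no_local_periodicity_at P r s cmp d v \<longleftrightarrow>
     (\<forall>m n. m \<noteq> n \<longrightarrow>
        (\<exists>f\<in>P. r f = v \<and> dle (djoin m n) (d f) \<and>
           seg P r s cmp d f m (dadd m (dsub (d f) (djoin m n)))
           \<noteq> seg P r s cmp d f n (dadd n (dsub (d f) (djoin m n)))))"

definition aperiodic ::
  "'v set \<Rightarrow> 'a set \<Rightarrow> ('a \<Rightarrow> 'v) \<Rightarrow> ('a \<Rightarrow> 'v) \<Rightarrow> ('a \<Rightarrow> 'a \<Rightarrow> 'a) \<Rightarrow> ('a \<Rightarrow> deg) \<Rightarrow> bool" where
  "aperiodic V P r s cmp d \<longleftrightarrow> (\<forall>v\<in>V. no_local_periodicity_at P r s cmp d v)"

definition paths_between ::
  "'a set \<Rightarrow> ('a \<Rightarrow> 'v) \<Rightarrow> ('a \<Rightarrow> 'v) \<Rightarrow> ('a \<Rightarrow> deg) \<Rightarrow> 'v \<Rightarrow> deg \<Rightarrow> 'v \<Rightarrow> 'a set" where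
  "paths_between P r s d u n w = {f\<in>P. r f = u \<and> d f = n \<and> s f = w}"

definition aperiodic_quartet ::
  "'a set \<Rightarrow> ('a \<Rightarrow> 'v) \<Rightarrow> ('a \<Rightarrow> 'v) \<Rightarrow> ('a \<Rightarrow> 'a \<Rightarrow> 'a) \<Rightarrow> ('a \<Rightarrow> deg)
   \<Rightarrow> nat \<Rightarrow> nat \<Rightarrow> 'v \<Rightarrow> 'a \<Rightarrow> 'a \<Rightarrow> 'a \<Rightarrow> 'a \<Rightarrow> bool" where
  "aperiodic_quartet P r s cmp d a b u \<alpha>1 \<alpha>2 \<beta>1 \<beta>2 \<longleftrightarrow>
     0 < a \<and> 0 < b \<and>
     \<alpha>1 \<in> paths_between P r s d u (a, 0) u \<and> \<alpha>2 \<in> paths_between P r s d u (a, 0) u \<and>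
     \<alpha>1 \<noteq> \<alpha>2 \<and>
     \<beta>1 \<in> paths_between P r s d u (0, b) u \<and> \<beta>2 \<in> paths_between P r s d u (0, b) u \<and>
     \<beta>1 \<noteq> \<beta>2 \<and>
     cmp \<beta>2 \<alpha>1 = cmp \<alpha>1 \<beta>2 \<and> cmp \<beta>2 \<alpha>2 = cmp \<alpha>2 \<beta>2 \<and>
     cmp \<beta>1 \<alpha>1 = cmp \<alpha>2 \<beta>1 \<and> cmp \<beta>1 \<alpha>2 = cmp \<alpha>1 \<beta>1"

definition has_aperiodic_quartet_at ::
  "'a set \<Rightarrow> ('a \<Rightarrow> 'v) \<Rightarrow> ('a \<Rightarrow> 'v) \<Rightarrow> ('a \<Rightarrow> 'a \<Rightarrow> 'a) \<Rightarrow> ('a \<Rightarrow> deg) \<Rightarrow> 'v \<Rightarrow> bool" where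
  "has_aperiodic_quartet_at P r s cmp d u \<longleftrightarrow>
     (\<exists>a b \<alpha>1 \<alpha>2 \<beta>1 \<beta>2. aperiodic_quartet P r s cmp d a b u \<alpha>1 \<alpha>2 \<beta>1 \<beta>2)"

end

theory Submission
  imports Defs
begin

lemma dadd_simp[simp]: "dadd (a,b) (c,e) = (a+c, b+e)" by (simp add: dadd_def)
lemma dsub_simp[simp]: "dsub (a,b) (c,e) = (a-c, b-e)" by (simp add: dsub_def)
lemma dle_simp[simp]: "dle (a,b) (c,e) = (a \<le> c \<and> b \<le> e)" by (simp add: dle_def)
lemma djoin_simp[simp]: "djoin (a,b) (c,e) = (max a c, max b e)" by (simp add: djoin_def)

definition dsc :: "nat \<Rightarrow> deg \<Rightarrow> deg" where "dsc k m = (k * fst m, k * snd m)"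

locale tg =
  fixes V :: "'v set" and P :: "'a set" and r s :: "'a \<Rightarrow> 'v"
    and cmp :: "'a \<Rightarrow> 'a \<Rightarrow> 'a" and idt :: "'v \<Rightarrow> 'a" and d :: "'a \<Rightarrow> deg"
  assumes tg: "two_graph V P r s cmp idt d"
begin

lemma cmpP: "f\<in>P \<Longrightarrow> g\<in>P \<Longrightarrow> s f = r g \<Longrightarrow> cmp f g \<in> P"
  using tg unfolding two_graph_def by blast
lemma cmp_r: "f\<in>P \<Longrightarrow> g\<in>P \<Longrightarrow> s f = r g \<Longrightarrow> r (cmp f g) = r f"
  using tg unfolding two_graph_def by blast
lemma cmp_s: "f\<in>P \<Longrightarrow> g\<in>P \<Longrightarrow> s f = r g \<Longrightarrow> s (cmp f g) = s g"
  using tg unfolding two_graph_def by blast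
lemma assoc: "f\<in>P \<Longrightarrow> g\<in>P \<Longrightarrow> h\<in>P \<Longrightarrow> s f = r g \<Longrightarrow> s g = r h \<Longrightarrow>
   cmp (cmp f g) h = cmp f (cmp g h)"
  using tg unfolding two_graph_def by blast
lemma d_cmp: "f\<in>P \<Longrightarrow> g\<in>P \<Longrightarrow> s f = r g \<Longrightarrow> d (cmp f g) = dadd (d f) (d g)"
  using tg unfolding two_graph_def by blast
lemma idtP: "v\<in>V \<Longrightarrow> idt v \<in> P" "v\<in>V \<Longrightarrow> r (idt v) = v" "v\<in>V \<Longrightarrow> s (idt v) = v"
  "v\<in>V \<Longrightarrow> d (idt v) = (0,0)"
  using tg unfolding two_graph_def by blast+
lemma unitl: "f\<in>P \<Longrightarrow> cmp (idt (r f)) f = f" and unitr: "f\<in>P \<Longrightarrow> cmp f (idt (s f)) = f"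
  using tg unfolding two_graph_def by blast+
lemma rsV: "f\<in>P \<Longrightarrow> r f \<in> V" "f\<in>P \<Longrightarrow> s f \<in> V"
  using tg unfolding two_graph_def by blast+

lemma fact: "f\<in>P \<Longrightarrow> d f = dadd m n \<Longrightarrow> (\<exists>!p. fst p \<in> P \<and> snd p \<in> P \<and> s (fst p) = r (snd p) \<and>
              f = cmp (fst p) (snd p) \<and> d (fst p) = m \<and> d (snd p) = n)"
  using tg unfolding two_graph_def by blast

lemma fact_ex: assumes "f\<in>P" "d f = dadd m n"
  shows "\<exists>g h. g\<in>P \<and> h\<in>P \<and> s g = r h \<and> f = cmp g h \<and> d g = m \<and> d h = n"
proof -
  from tg assms have "\<exists>!p. fst p \<in> P \<and> snd p \<in> P \<and> s (fst p) = r (snd p) \<and>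
              f = cmp (fst p) (snd p) \<and> d (fst p) = m \<and> d (snd p) = n"
    unfolding two_graph_def by blast
  then show ?thesis by blast
qed

lemma fact_uniq: assumes "g\<in>P" "h\<in>P" "g'\<in>P" "h'\<in>P" "s g = r h" "s g' = r h'"
  "cmp g h = cmp g' h'" "d g = d g'" "d h = d h'"
  shows "g = g' \<and> h = h'"
proof -
  let ?f = "cmp g h"
  have fP: "?f \<in> P" using assms cmpP by blast
  have df: "d ?f = dadd (d g) (d h)" using assms d_cmp by blast
  from fact[OF fP df] have "\<exists>!p. fst p \<in> P \<and> snd p \<in> P \<and> s (fst p) = r (snd p) \<and>
              ?f = cmp (fst p) (snd p) \<and> d (fst p) = d g \<and> d (snd p) = d h"
    .
  then have U: "\<And>p q. fst p \<in> P \<and> snd p \<in> P \<and> s (fst p) = r (snd p) \<and>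
              ?f = cmp (fst p) (snd p) \<and> d (fst p) = d g \<and> d (snd p) = d h \<Longrightarrow>
     fst q \<in> P \<and> snd q \<in> P \<and> s (fst q) = r (snd q) \<and>
              ?f = cmp (fst q) (snd q) \<and> d (fst q) = d g \<and> d (snd q) = d h \<Longrightarrow> p = q"
    by blast
  have "(g,h) = (g',h')" by (rule U) (use assms in auto)
  then show ?thesis by simp
qed

lemma seg_eq:
  assumes "f1\<in>P" "g\<in>P" "f2\<in>P" "s f1 = r g" "s g = r f2" "f = cmp (cmp f1 g) f2"
    "d f1 = m" "d g = dsub n m"
  shows "seg P r s cmp d f m n = g"
  unfolding seg_def
proof (rule the_equality)
  show "g \<in> P \<and> (\<exists>f1\<in>P. \<exists>f2\<in>P. s f1 = r g \<and> s g = r f2 \<and>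
        f = cmp (cmp f1 g) f2 \<and> d f1 = m \<and> d g = dsub n m)" using assms by blast
next
  fix g' assume "g' \<in> P \<and> (\<exists>f1\<in>P. \<exists>f2\<in>P. s f1 = r g' \<and> s g' = r f2 \<and>
        f = cmp (cmp f1 g') f2 \<and> d f1 = m \<and> d g' = dsub n m)"
  then obtain f1' f2' where h: "g'\<in>P" "f1'\<in>P" "f2'\<in>P" "s f1' = r g'" "s g' = r f2'"
    "f = cmp (cmp f1' g') f2'" "d f1' = m" "d g' = dsub n m" by blast
  have e1: "f = cmp f1 (cmp g f2)" using assms assoc[of f1 g f2] by simp
  have e2: "f = cmp f1' (cmp g' f2')" using h assoc[of f1' g' f2'] by simp
  have dd: "d f = dadd m (dadd (d g) (d f2))" using assms d_cmp[of f1 "cmp g f2"] d_cmp[of g f2] e1 cmpP[of g f2] cmp_r[of g f2] by simp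
  have dd': "d f = dadd m (dadd (d g') (d f2'))" using h d_cmp[of f1' "cmp g' f2'"] d_cmp[of g' f2'] e2 cmpP[of g' f2'] cmp_r[of g' f2'] by simp
  have "d f2 = d f2'" using dd dd' assms h by (simp add: dadd_def prod_eq_iff)
  have P1: "cmp g f2 \<in> P" "cmp g' f2' \<in> P" using assms h cmpP by auto
  have R1: "s f1 = r (cmp g f2)" "s f1' = r (cmp g' f2')" using assms h cmp_r by auto
  have D1: "d (cmp g f2) = d (cmp g' f2')" using assms h d_cmp \<open>d f2 = d f2'\<close> by simp
  have "f1 = f1' \<and> cmp g f2 = cmp g' f2'"
    by (rule fact_uniq[OF assms(1) P1(1) h(2) P1(2) R1]) (use e1 e2 assms h D1 in auto)
  then show "g' = g"
    using fact_uniq[of g f2 g' f2'] assms h \<open>d f2 = d f2'\<close> by auto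
qed

lemma seg_ex:
  assumes "f\<in>P" "dle m n" "dle n (d f)"
  shows "\<exists>f1 g f2. f1\<in>P \<and> g\<in>P \<and> f2\<in>P \<and> s f1 = r g \<and> s g = r f2 \<and> f = cmp (cmp f1 g) f2
     \<and> d f1 = m \<and> d g = dsub n m \<and> d f2 = dsub (d f) n"
proof -
  have "d f = dadd m (dsub (d f) m)" using assms by (auto simp: dadd_def dsub_def dle_def prod_eq_iff)
  then obtain f1 h where h: "f1\<in>P" "h\<in>P" "s f1 = r h" "f = cmp f1 h" "d f1 = m" "d h = dsub (d f) m"
    using fact_ex assms by blast
  have "d h = dadd (dsub n m) (dsub (d f) n)" using h(6) assms
    by (auto simp: dadd_def dsub_def dle_def prod_eq_iff)
  then obtain g f2 where g: "g\<in>P" "f2\<in>P" "s g = r f2" "h = cmp g f2" "d g = dsub n m" "d f2 = dsub (d f) n"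
    using fact_ex h by blast
  have "f = cmp (cmp f1 g) f2" using h g assoc[of f1 g f2] cmp_r[of g f2] by simp
  moreover have "s f1 = r g" using h g cmp_r[of g f2] by simp
  ultimately show ?thesis using h g by blast
qed


lemmas dsimps = dadd_def dsub_def dle_def djoin_def prod_eq_iff

lemma seg_props:
  assumes "f\<in>P" "dle m n" "dle n (d f)"
  shows "seg P r s cmp d f m n \<in> P \<and> d (seg P r s cmp d f m n) = dsub n m"
proof -
  obtain f1 g f2 where h: "f1\<in>P \<and> g\<in>P \<and> f2\<in>P \<and> s f1 = r g \<and> s g = r f2 \<and> f = cmp (cmp f1 g) f2
     \<and> d f1 = m \<and> d g = dsub n m \<and> d f2 = dsub (d f) n" using seg_ex[OF assms] by blast
  then have "seg P r s cmp d f m n = g" using seg_eq by blast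
  then show ?thesis using h by simp
qed

lemma seg_seg:
  assumes "f\<in>P" "dle a b" "dle b (d f)" "dle x y" "dle y (dsub b a)"
  shows "seg P r s cmp d (seg P r s cmp d f a b) x y = seg P r s cmp d f (dadd a x) (dadd a y)"
proof -
  obtain f1 g f2 where h: "f1\<in>P" "g\<in>P" "f2\<in>P" "s f1 = r g" "s g = r f2" "f = cmp (cmp f1 g) f2"
     "d f1 = a" "d g = dsub b a" "d f2 = dsub (d f) b" using seg_ex[OF assms(1-3)] by blast
  have sg: "seg P r s cmp d f a b = g" using seg_eq h by blast
  obtain g1 h1 g2 where k: "g1\<in>P" "h1\<in>P" "g2\<in>P" "s g1 = r h1" "s h1 = r g2" "g = cmp (cmp g1 h1) g2"
     "d g1 = x" "d h1 = dsub y x" "d g2 = dsub (d g) y" using seg_ex[OF h(2) assms(4)] assms(5) h(8) by metis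
  have rg: "r g = r g1" "s g = s g2" using k cmp_r cmp_s cmpP by auto
  have "f = cmp (cmp (cmp f1 g1) h1) (cmp g2 f2)"
    using h k rg by (simp add: assoc cmpP cmp_r cmp_s)
  moreover have "d (cmp f1 g1) = dadd a x" using h k rg d_cmp by simp
  moreover have "d h1 = dsub (dadd a y) (dadd a x)" using k(8) by (simp add: dsimps)
  ultimately have "seg P r s cmp d f (dadd a x) (dadd a y) = h1"
    using h k rg by (intro seg_eq[of "cmp f1 g1" h1 "cmp g2 f2"]) (auto simp: cmpP cmp_r cmp_s)
  moreover have "seg P r s cmp d g x y = h1" using seg_eq k by blast
  ultimately show ?thesis using sg by simp
qed

lemma seg_cmp:
  assumes "l\<in>P" "\<mu>\<in>P" "s l = r \<mu>" "dle x y" "dle y (d \<mu>)"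
  shows "seg P r s cmp d (cmp l \<mu>) (dadd (d l) x) (dadd (d l) y) = seg P r s cmp d \<mu> x y"
proof -
  obtain g1 h1 g2 where k: "g1\<in>P" "h1\<in>P" "g2\<in>P" "s g1 = r h1" "s h1 = r g2" "\<mu> = cmp (cmp g1 h1) g2"
     "d g1 = x" "d h1 = dsub y x" "d g2 = dsub (d \<mu>) y" using seg_ex[OF assms(2) assms(4,5)] by blast
  have rg: "r \<mu> = r g1" using k cmp_r cmp_s cmpP by auto
  have "cmp l \<mu> = cmp (cmp (cmp l g1) h1) g2"
    using assms k rg by (simp add: assoc cmpP cmp_r cmp_s)
  moreover have "d (cmp l g1) = dadd (d l) x" using assms k rg d_cmp by simp
  moreover have "d h1 = dsub (dadd (d l) y) (dadd (d l) x)" using k(8) by (simp add: dsimps)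
  ultimately have "seg P r s cmp d (cmp l \<mu>) (dadd (d l) x) (dadd (d l) y) = h1"
    using assms k rg by (intro seg_eq[of "cmp l g1" h1 g2]) (auto simp: cmpP cmp_r cmp_s)
  moreover have "seg P r s cmp d \<mu> x y = h1" using seg_eq k by blast
  ultimately show ?thesis by simp
qed

lemma le_mult: "0 < (b::nat) \<Longrightarrow> x \<le> b * x" by (cases b) auto

lemma ar1: "(Suc k) * M + y \<le> (T::nat) \<Longrightarrow> a \<le> M \<Longrightarrow> k*a + y \<le> T"
proof -
  assume "(Suc k) * M + y \<le> (T::nat)" "a \<le> M"
  moreover have "k*a \<le> k*M" using \<open>a \<le> M\<close> by simp
  ultimately show ?thesis by (simp only: mult_Suc)
qed
lemma ar2: "(Suc k) * M + y \<le> (T::nat) \<Longrightarrow> a \<le> M \<Longrightarrow> k*M + (a + y) \<le> T"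
  by simp


lemma shift_iter:
  assumes "f\<in>P" "dle (djoin m n) (d f)"
    and eq: "seg P r s cmp d f m (dadd m (dsub (d f) (djoin m n)))
           = seg P r s cmp d f n (dadd n (dsub (d f) (djoin m n)))"
  shows "dle x y \<Longrightarrow> dle (dadd (dsc k (djoin m n)) y) (dsub (d f) (djoin m n)) \<Longrightarrow>
    seg P r s cmp d f (dadd (dsc k m) x) (dadd (dsc k m) y) = seg P r s cmp d f (dadd (dsc k n) x) (dadd (dsc k n) y)"
proof (induction k arbitrary: x y)
  case 0
  then show ?case by (simp add: dsc_def dadd_def)
next
  case (Suc k)
  let ?t = "dsub (d f) (djoin m n)"
  have S: "seg P r s cmp d f (dadd m x') (dadd m y') = seg P r s cmp d f (dadd n x') (dadd n y')"
    if "dle x' y'" "dle y' ?t" for x' y'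
  proof -
    have "seg P r s cmp d (seg P r s cmp d f m (dadd m ?t)) x' y' = seg P r s cmp d f (dadd m x') (dadd m y')"
      using assms(1,2) that by (intro seg_seg) (auto simp: dsimps)
    moreover have "seg P r s cmp d (seg P r s cmp d f n (dadd n ?t)) x' y' = seg P r s cmp d f (dadd n x') (dadd n y')"
      using assms(1,2) that by (intro seg_seg) (auto simp: dsimps)
    ultimately show ?thesis using eq by simp
  qed
  have e1: "dadd (dsc (Suc k) m) x = dadd m (dadd (dsc k m) x)" "dadd (dsc (Suc k) m) y = dadd m (dadd (dsc k m) y)"
    by (auto simp: dsimps dsc_def)
  have e2: "dadd n (dadd (dsc k m) x) = dadd (dsc k m) (dadd n x)" "dadd n (dadd (dsc k m) y) = dadd (dsc k m) (dadd n y)"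
    by (auto simp: dsimps dsc_def)
  have e3: "dadd (dsc k n) (dadd n x) = dadd (dsc (Suc k) n) x" "dadd (dsc k n) (dadd n y) = dadd (dsc (Suc k) n) y"
    by (auto simp: dsimps dsc_def)
  have km: "k * fst m \<le> k * max (fst m) (fst n)" "k * snd m \<le> k * max (snd m) (snd n)"
    "k * fst n \<le> k * max (fst m) (fst n)" "k * snd n \<le> k * max (snd m) (snd n)" by auto
  have "seg P r s cmp d f (dadd (dsc (Suc k) m) x) (dadd (dsc (Suc k) m) y)
      = seg P r s cmp d f (dadd n (dadd (dsc k m) x)) (dadd n (dadd (dsc k m) y))"
    unfolding e1 using Suc.prems by (intro S) (auto simp: dsimps dsc_def intro: ar1)
  also have "\<dots> = seg P r s cmp d f (dadd (dsc k n) (dadd n x)) (dadd (dsc k n) (dadd n y))"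
    unfolding e2 using Suc.prems by (intro Suc.IH) (auto simp: dsimps dsc_def intro: ar2)
  finally show ?case unfolding e3 .
qed


context fixes u assumes uV: "u \<in> V"
begin

definition lp where "lp g \<longleftrightarrow> g \<in> P \<and> r g = u \<and> s g = u"
definition pw where "pw g k = (cmp g ^^ k) (idt u)"

lemma lp_cmp[simp]: "lp g \<Longrightarrow> lp h \<Longrightarrow> lp (cmp g h)"
  unfolding lp_def using cmpP cmp_r cmp_s by auto
lemma lp_idt[simp]: "lp (idt u)" unfolding lp_def using idtP uV by auto
lemma as: "lp x \<Longrightarrow> lp y \<Longrightarrow> lp z \<Longrightarrow> cmp (cmp x y) z = cmp x (cmp y z)"
  unfolding lp_def using assoc by auto
lemma ul[simp]: "lp x \<Longrightarrow> cmp (idt u) x = x" unfolding lp_def using unitl by force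
lemma ur[simp]: "lp x \<Longrightarrow> cmp x (idt u) = x" unfolding lp_def using unitr by force
lemma dl[simp]: "lp x \<Longrightarrow> lp y \<Longrightarrow> d (cmp x y) = dadd (d x) (d y)"
  unfolding lp_def using d_cmp by auto
lemma pw0[simp]: "pw g 0 = idt u" unfolding pw_def by simp
lemma pwS: "pw g (Suc k) = cmp g (pw g k)" unfolding pw_def by simp
lemma pw_lp[simp]: "lp g \<Longrightarrow> lp (pw g k)" by (induction k) (auto simp: pwS)
lemma pw_add: "lp g \<Longrightarrow> pw g (i + j) = cmp (pw g i) (pw g j)"
  by (induction i) (auto simp: pwS as)
lemma pw_d: "lp g \<Longrightarrow> d (pw g k) = (k * fst (d g), k * snd (d g))"
  by (induction k) (auto simp: pwS dadd_def idtP uV)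
lemma comm_pw: "lp x \<Longrightarrow> lp y \<Longrightarrow> lp z \<Longrightarrow> cmp x y = cmp y z \<Longrightarrow> cmp (pw x k) y = cmp y (pw z k)"
proof (induction k)
  case 0 then show ?case by simp
next
  case (Suc k)
  have "cmp (pw x (Suc k)) y = cmp x (cmp (pw x k) y)" by (simp add: pwS as Suc.prems)
  also have "\<dots> = cmp (cmp x y) (pw z k)" using Suc.IH Suc.prems as[of x y "pw z k"] by simp
  also have "\<dots> = cmp (cmp y z) (pw z k)" by (simp only: Suc.prems(4))
  also have "\<dots> = cmp y (pw z (Suc k))" using Suc.prems by (simp add: as pwS)
  finally show ?case .
qed
lemma comm_prod: "lp c \<Longrightarrow> lp x \<Longrightarrow> lp y \<Longrightarrow> cmp c x = cmp x c \<Longrightarrow> cmp c y = cmp y c \<Longrightarrow>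
   cmp c (cmp x y) = cmp (cmp x y) c"
proof -
  assume h: "lp c" "lp x" "lp y" "cmp c x = cmp x c" "cmp c y = cmp y c"
  have "cmp c (cmp x y) = cmp (cmp x c) y" using h by (simp flip: as)
  also have "\<dots> = cmp x (cmp y c)" using h by (simp add: as)
  finally show ?thesis using h by (simp add: as)
qed

lemma seg_loop: "lp f1 \<Longrightarrow> lp X \<Longrightarrow> lp f2 \<Longrightarrow> d f1 = z \<Longrightarrow>
  seg P r s cmp d (cmp f1 (cmp X f2)) z (dadd z (d X)) = X"
  apply (rule seg_eq[of f1 X f2])
  by (auto simp: lp_def as dsimps)


lemma comm_pws: "lp x \<Longrightarrow> lp y \<Longrightarrow> cmp x y = cmp y x \<Longrightarrow> cmp (pw x k) (pw y j) = cmp (pw y j) (pw x k)"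
proof -
  assume h: "lp x" "lp y" "cmp x y = cmp y x"
  have "cmp (pw x k) y = cmp y (pw x k)" using comm_pw[of x y x k] h by simp
  then have "cmp (pw y j) (pw x k) = cmp (pw x k) (pw y j)" using comm_pw[of y "pw x k" y j] h by simp
  then show ?thesis by simp
qed

lemma case1:
  assumes l: "lp \<alpha>1" "lp \<alpha>2" "lp \<beta>2" and dg: "d \<alpha>1 = (a,0)" "d \<alpha>2 = (a,0)" "d \<beta>2 = (0,b)"
   and cm: "cmp \<beta>2 \<alpha>1 = cmp \<alpha>1 \<beta>2" "cmp \<beta>2 \<alpha>2 = cmp \<alpha>2 \<beta>2" and ij: "i0 \<le> i'" "j0 \<le> J"
  shows "seg P r s cmp d (cmp (pw \<alpha>1 i') (cmp \<alpha>2 (cmp (pw \<alpha>1 R) (pw \<beta>2 J)))) (a*i0, b*j0) (a*i0+a, b*j0)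
    = (if i0 < i' then \<alpha>1 else \<alpha>2)"
proof -
  define W where "W = cmp (pw \<alpha>1 (i'-i0)) (cmp \<alpha>2 (pw \<alpha>1 R))"
  define T where "T = pw \<beta>2 (J-j0)"
  define X where "X = (if i0 < i' then \<alpha>1 else \<alpha>2)"
  define W' where "W' = (if i0 < i' then cmp (pw \<alpha>1 (i'-i0-1)) (cmp \<alpha>2 (pw \<alpha>1 R)) else pw \<alpha>1 R)"
  have lW: "lp W" "lp T" "lp X" "lp W'" using l by (auto simp: W_def T_def X_def W'_def)
  have WX: "W = cmp X W'"
  proof (cases "i0 < i'")
    case True
    then have "pw \<alpha>1 (i'-i0) = cmp \<alpha>1 (pw \<alpha>1 (i'-i0-1))" using pwS[of \<alpha>1 "i'-i0-1"] True
      by (simp add: Suc_diff_Suc[symmetric])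
    then show ?thesis using True l by (simp add: W_def X_def W'_def as)
  next
    case False
    then show ?thesis using ij l by (simp add: W_def X_def W'_def)
  qed
  have c1: "cmp (pw \<beta>2 j0) (pw \<alpha>1 k) = cmp (pw \<alpha>1 k) (pw \<beta>2 j0)" for k
    using comm_pws[of \<beta>2 \<alpha>1 j0 k] l cm by simp
  have c2: "cmp (pw \<beta>2 j0) \<alpha>2 = cmp \<alpha>2 (pw \<beta>2 j0)"
    using comm_pw[of \<beta>2 \<alpha>2 \<beta>2 j0] l cm by simp
  have cW: "cmp (pw \<beta>2 j0) W = cmp W (pw \<beta>2 j0)" unfolding W_def
    using l c1 c2 by (intro comm_prod comm_prod[of _ \<alpha>2]) auto
  have s1: "pw \<alpha>1 i' = cmp (pw \<alpha>1 i0) (pw \<alpha>1 (i'-i0))" using pw_add[of \<alpha>1 i0 "i'-i0"] l ij by simp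
  have s2: "pw \<beta>2 J = cmp (pw \<beta>2 j0) T" using pw_add[of \<beta>2 j0 "J-j0"] l ij by (simp add: T_def)
  have "cmp (pw \<alpha>1 i') (cmp \<alpha>2 (cmp (pw \<alpha>1 R) (pw \<beta>2 J)))
      = cmp (pw \<alpha>1 i0) (cmp (cmp W (pw \<beta>2 j0)) T)"
    unfolding s1 s2 W_def using l lW by (simp add: as)
  also have "\<dots> = cmp (pw \<alpha>1 i0) (cmp (cmp (pw \<beta>2 j0) W) T)" by (simp only: cW)
  also have "\<dots> = cmp (cmp (pw \<alpha>1 i0) (pw \<beta>2 j0)) (cmp X (cmp W' T))"
    unfolding WX using l lW by (simp add: as)
  finally have E: "cmp (pw \<alpha>1 i') (cmp \<alpha>2 (cmp (pw \<alpha>1 R) (pw \<beta>2 J))) =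
     cmp (cmp (pw \<alpha>1 i0) (pw \<beta>2 j0)) (cmp X (cmp W' T))" .
  have dX: "d X = (a,0)" using dg by (simp add: X_def)
  have "seg P r s cmp d (cmp (cmp (pw \<alpha>1 i0) (pw \<beta>2 j0)) (cmp X (cmp W' T))) (a*i0, b*j0) (dadd (a*i0, b*j0) (d X)) = X"
    using l lW by (intro seg_loop) (auto simp: pw_d dg)
  then show ?thesis unfolding E using dX by (simp add: X_def)
qed


lemma case2:
  assumes l: "lp \<alpha>1" "lp \<alpha>2" "lp \<beta>1" "lp \<beta>2" and dg: "d \<alpha>1 = (a,0)" "d \<alpha>2 = (a,0)" "d \<beta>1 = (0,b)" "d \<beta>2 = (0,b)"
   and cm: "cmp \<beta>2 \<alpha>1 = cmp \<alpha>1 \<beta>2" "cmp \<beta>2 \<alpha>2 = cmp \<alpha>2 \<beta>2" "cmp \<beta>1 \<alpha>2 = cmp \<alpha>1 \<beta>1"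
   and ij: "i0 < I"
  shows "seg P r s cmp d (cmp (pw \<alpha>1 I) (cmp (pw \<beta>2 j) (cmp \<beta>1 (pw \<beta>2 R)))) (a*i0, b*j) (a*i0+a, b*j) = \<alpha>1"
    and "c \<le> R \<Longrightarrow> seg P r s cmp d (cmp (pw \<alpha>1 I) (cmp (pw \<beta>2 j) (cmp \<beta>1 (pw \<beta>2 R))))
          (a*i0, b*(j+1+c)) (a*i0+a, b*(j+1+c)) = \<alpha>2"
proof -
  define k where "k = I - i0 - 1"
  have Ik: "I = i0 + Suc k" using ij by (simp add: k_def)
  have c1: "cmp (pw \<alpha>1 (Suc k)) (pw \<beta>2 j) = cmp (pw \<beta>2 j) (pw \<alpha>1 (Suc k))"
    using comm_pws[of \<alpha>1 \<beta>2 "Suc k" j] l cm by simp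
  have c1': "cmp (pw \<alpha>1 (Suc k)) (cmp (pw \<beta>2 j) z) = cmp (pw \<beta>2 j) (cmp (pw \<alpha>1 (Suc k)) z)" if "lp z" for z
    using c1 l that by (metis as pw_lp)
  let ?\<mu> = "cmp (pw \<alpha>1 I) (cmp (pw \<beta>2 j) (cmp \<beta>1 (pw \<beta>2 R)))"
  have "?\<mu> = cmp (pw \<alpha>1 i0) (cmp (pw \<alpha>1 (Suc k)) (cmp (pw \<beta>2 j) (cmp \<beta>1 (pw \<beta>2 R))))"
    unfolding Ik using l pw_add[of \<alpha>1 i0 "Suc k"] by (simp only: as pw_lp lp_cmp)
  also have "\<dots> = cmp (pw \<alpha>1 i0) (cmp (pw \<beta>2 j) (cmp (pw \<alpha>1 (Suc k)) (cmp \<beta>1 (pw \<beta>2 R))))"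
    using c1' l by simp
  also have "\<dots> = cmp (cmp (pw \<alpha>1 i0) (pw \<beta>2 j)) (cmp \<alpha>1 (cmp (pw \<alpha>1 k) (cmp \<beta>1 (pw \<beta>2 R))))"
    using l by (simp add: as pwS)
  finally have E1: "?\<mu> = \<dots>" .
  have "seg P r s cmp d (cmp (cmp (pw \<alpha>1 i0) (pw \<beta>2 j)) (cmp \<alpha>1 (cmp (pw \<alpha>1 k) (cmp \<beta>1 (pw \<beta>2 R)))))
     (a*i0, b*j) (dadd (a*i0, b*j) (d \<alpha>1)) = \<alpha>1"
    using l by (intro seg_loop) (auto simp: pw_d dg)
  then show "seg P r s cmp d ?\<mu> (a*i0, b*j) (a*i0+a, b*j) = \<alpha>1" unfolding E1 using dg by simp
  assume cR: "c \<le> R"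
  have sR: "pw \<beta>2 R = cmp (pw \<beta>2 c) (pw \<beta>2 (R-c))" using pw_add[of \<beta>2 c "R-c"] l cR by simp
  have c2: "cmp (pw \<alpha>1 (Suc k)) \<beta>1 = cmp \<beta>1 (pw \<alpha>2 (Suc k))"
    using comm_pw[of \<alpha>1 \<beta>1 \<alpha>2 "Suc k"] l cm by simp
  have c2': "cmp (pw \<alpha>1 (Suc k)) (cmp \<beta>1 z) = cmp \<beta>1 (cmp (pw \<alpha>2 (Suc k)) z)" if "lp z" for z
    using c2 l that by (metis as pw_lp)
  have c3: "cmp (pw \<alpha>2 (Suc k)) (pw \<beta>2 c) = cmp (pw \<beta>2 c) (pw \<alpha>2 (Suc k))"
    using comm_pws[of \<alpha>2 \<beta>2 "Suc k" c] l cm by simp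
  have c3': "cmp (pw \<alpha>2 (Suc k)) (cmp (pw \<beta>2 c) z) = cmp (pw \<beta>2 c) (cmp (pw \<alpha>2 (Suc k)) z)" if "lp z" for z
    using c3 l that by (metis as pw_lp)
  have "?\<mu> = cmp (pw \<alpha>1 i0) (cmp (pw \<beta>2 j) (cmp (pw \<alpha>1 (Suc k)) (cmp \<beta>1 (cmp (pw \<beta>2 c) (pw \<beta>2 (R-c))))))"
    unfolding sR[symmetric] using E1 l by (simp add: as pwS)
  also have "\<dots> = cmp (pw \<alpha>1 i0) (cmp (pw \<beta>2 j) (cmp \<beta>1 (cmp (pw \<alpha>2 (Suc k)) (cmp (pw \<beta>2 c) (pw \<beta>2 (R-c))))))"
    using c2' l by simp
  also have "\<dots> = cmp (pw \<alpha>1 i0) (cmp (pw \<beta>2 j) (cmp \<beta>1 (cmp (pw \<beta>2 c) (cmp (pw \<alpha>2 (Suc k)) (pw \<beta>2 (R-c))))))"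
    using c3' l by simp
  also have "\<dots> = cmp (cmp (pw \<alpha>1 i0) (cmp (pw \<beta>2 j) (cmp \<beta>1 (pw \<beta>2 c)))) (cmp \<alpha>2 (cmp (pw \<alpha>2 k) (pw \<beta>2 (R-c))))"
    using l by (simp add: as pwS)
  finally have E2: "?\<mu> = \<dots>" .
  have "seg P r s cmp d (cmp (cmp (pw \<alpha>1 i0) (cmp (pw \<beta>2 j) (cmp \<beta>1 (pw \<beta>2 c)))) (cmp \<alpha>2 (cmp (pw \<alpha>2 k) (pw \<beta>2 (R-c)))))
     (a*i0, b*(j+1+c)) (dadd (a*i0, b*(j+1+c)) (d \<alpha>2)) = \<alpha>2"
    using l by (intro seg_loop) (auto simp: pw_d dg algebra_simps)
  then show "seg P r s cmp d ?\<mu> (a*i0, b*(j+1+c)) (a*i0+a, b*(j+1+c)) = \<alpha>2" unfolding E2 using dg by simp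
qed


lemma core:
  assumes q: "aperiodic_quartet P r s cmp d a b u \<alpha>1 \<alpha>2 \<beta>1 \<beta>2" and ne: "(i1,j1) \<noteq> (i2,j2)"
  shows "\<exists>\<mu>. lp \<mu> \<and> dle B (d \<mu>) \<and>
     seg P r s cmp d \<mu> (a*i1, b*j1) (a*i1+a, b*j1) \<noteq> seg P r s cmp d \<mu> (a*i2, b*j2) (a*i2+a, b*j2)"
proof -
  have l: "lp \<alpha>1" "lp \<alpha>2" "lp \<beta>1" "lp \<beta>2" and dg: "d \<alpha>1 = (a,0)" "d \<alpha>2 = (a,0)" "d \<beta>1 = (0,b)" "d \<beta>2 = (0,b)"
    and cm: "cmp \<beta>2 \<alpha>1 = cmp \<alpha>1 \<beta>2" "cmp \<beta>2 \<alpha>2 = cmp \<alpha>2 \<beta>2" "cmp \<beta>1 \<alpha>2 = cmp \<alpha>1 \<beta>1"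
    and ab: "0 < a" "0 < b" and neq: "\<alpha>1 \<noteq> \<alpha>2"
    using q unfolding aperiodic_quartet_def paths_between_def lp_def by auto
  show ?thesis
  proof (cases "i1 = i2")
    case False
    define i' where "i' = max i1 i2"
    define R where "R = fst B"
    define J where "J = snd B + j1 + j2"
    define \<mu> where "\<mu> = cmp (pw \<alpha>1 i') (cmp \<alpha>2 (cmp (pw \<alpha>1 R) (pw \<beta>2 J)))"
    have lm: "lp \<mu>" using l by (simp add: \<mu>_def)
    have dm: "d \<mu> = (a * i' + (a + a * R), b * J)" using l dg by (simp add: \<mu>_def pw_d algebra_simps)
    have dm1: "fst (d \<mu>) = a * i' + (a + a * R)" "snd (d \<mu>) = b * J" using dm by auto
    have "fst B \<le> fst (d \<mu>)" using le_mult[OF ab(1), of R] dm1 R_def by linarith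
    moreover have "snd B \<le> snd (d \<mu>)" using le_mult[OF ab(2), of J] dm1 J_def by linarith
    ultimately have "dle B (d \<mu>)" unfolding dle_def by simp
    moreover have "seg P r s cmp d \<mu> (a*i1, b*j1) (a*i1+a, b*j1) = (if i1 < i' then \<alpha>1 else \<alpha>2)"
      unfolding \<mu>_def using l dg cm by (intro case1) (auto simp: i'_def J_def)
    moreover have "seg P r s cmp d \<mu> (a*i2, b*j2) (a*i2+a, b*j2) = (if i2 < i' then \<alpha>1 else \<alpha>2)"
      unfolding \<mu>_def using l dg cm by (intro case1) (auto simp: i'_def J_def)
    moreover have "(if i1 < i' then \<alpha>1 else \<alpha>2) \<noteq> (if i2 < i' then \<alpha>1 else \<alpha>2)"
      using False neq by (auto simp: i'_def)
    ultimately show ?thesis using lm by metis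
  next
    case True
    then have jne: "j1 \<noteq> j2" using ne by simp
    define j where "j = min j1 j2"
    define j' where "j' = max j1 j2"
    define c where "c = j' - j - 1"
    define I where "I = fst B + i1 + 1"
    define R where "R = snd B + j'"
    define \<mu> where "\<mu> = cmp (pw \<alpha>1 I) (cmp (pw \<beta>2 j) (cmp \<beta>1 (pw \<beta>2 R)))"
    have lm: "lp \<mu>" using l by (simp add: \<mu>_def)
    have dm: "d \<mu> = (a * I, b * j + (b + b * R))" using l dg by (simp add: \<mu>_def pw_d algebra_simps)
    have dm1: "fst (d \<mu>) = a * I" "snd (d \<mu>) = b * j + (b + b * R)" using dm by auto
    have "fst B \<le> fst (d \<mu>)" using le_mult[OF ab(1), of I] dm1 I_def by linarith
    moreover have "snd B \<le> snd (d \<mu>)" using le_mult[OF ab(2), of R] dm1 R_def by linarith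
    ultimately have "dle B (d \<mu>)" unfolding dle_def by simp
    have jj: "j' = j + 1 + c" using jne by (auto simp: j_def j'_def c_def)
    have A: "seg P r s cmp d \<mu> (a*i1, b*j) (a*i1+a, b*j) = \<alpha>1"
      unfolding \<mu>_def using l dg cm by (intro case2(1)) (auto simp: I_def)
    have Bq: "seg P r s cmp d \<mu> (a*i1, b*j') (a*i1+a, b*j') = \<alpha>2"
      unfolding \<mu>_def jj using l dg cm by (intro case2(2)) (auto simp: I_def R_def c_def j'_def)
    have "seg P r s cmp d \<mu> (a*i1, b*j1) (a*i1+a, b*j1) \<noteq> seg P r s cmp d \<mu> (a*i2, b*j2) (a*i2+a, b*j2)"
    proof (cases "j1 < j2")
      case True
      then have "j = j1" "j' = j2" by (auto simp: j_def j'_def)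
      then show ?thesis using A Bq neq \<open>i1 = i2\<close> by simp
    next
      case False
      then have "j = j2" "j' = j1" using jne by (auto simp: j_def j'_def)
      then show ?thesis using A Bq neq \<open>i1 = i2\<close> by simp
    qed
    then show ?thesis using lm \<open>dle B (d \<mu>)\<close> by blast
  qed
qed

end

end

lemma pos_eq: "dadd (dsc (a*b) m) l = dadd l (a*(b*fst m), b*(a*snd m))"
  by (simp add: dsc_def dadd_def algebra_simps)
lemma pos_eq2: "dadd (dsc (a*b) m) (dadd l (a,0)) = dadd l (a*(b*fst m)+a, b*(a*snd m))"
  by (simp add: dsc_def dadd_def algebra_simps)

theorem proposition3p7:
  fixes V :: "'v set" and P :: "'a set" and r s :: "'a \<Rightarrow> 'v"
    and cmp :: "'a \<Rightarrow> 'a \<Rightarrow> 'a" and idt :: "'v \<Rightarrow> 'a" and d :: "'a \<Rightarrow> deg"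
  assumes "two_graph V P r s cmp idt d"
    and "row_finite V P r d"
    and "no_sources V P r d"
    and "\<forall>v\<in>V. \<exists>u\<in>V. (\<exists>f\<in>P. r f = v \<and> s f = u) \<and> has_aperiodic_quartet_at P r s cmp d u"
  shows "aperiodic V P r s cmp d"
proof -
  interpret tg V P r s cmp idt d by unfold_locales (rule assms(1))
  show ?thesis unfolding aperiodic_def no_local_periodicity_at_def
  proof (intro ballI allI impI)
    fix v and m n :: deg assume vV: "v \<in> V" and mn: "m \<noteq> n"
    obtain u l where uV: "u\<in>V" "l\<in>P" "r l = v" "s l = u" and hq: "has_aperiodic_quartet_at P r s cmp d u"
      using assms(4) vV by blast
    then obtain a b \<alpha>1 \<alpha>2 \<beta>1 \<beta>2 where q: "aperiodic_quartet P r s cmp d a b u \<alpha>1 \<alpha>2 \<beta>1 \<beta>2"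
      unfolding has_aperiodic_quartet_at_def by blast
    have ab: "0 < a" "0 < b" using q unfolding aperiodic_quartet_def by auto
    define K where "K = a*b"
    define D where "D = djoin m n"
    define B where "B = dadd (dsc (Suc K) D) (a,0)"
    have ne: "(b*fst m, a*snd m) \<noteq> (b*fst n, a*snd n)" using mn ab by (auto simp: prod_eq_iff)
    obtain \<mu> where lm: "lp u \<mu>" "dle B (d \<mu>)" and neq:
      "seg P r s cmp d \<mu> (a*(b*fst m), b*(a*snd m)) (a*(b*fst m)+a, b*(a*snd m))
       \<noteq> seg P r s cmp d \<mu> (a*(b*fst n), b*(a*snd n)) (a*(b*fst n)+a, b*(a*snd n))"
      using core[OF uV(1) q ne, of B] by blast
    have \<mu>P: "\<mu> \<in> P" "r \<mu> = u" using lm(1) uV(1) lp_def[of u \<mu>] by auto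
    define f where "f = cmp l \<mu>"
    have fP: "f \<in> P" and rf: "r f = v" and df: "d f = dadd (d l) (d \<mu>)"
      using uV \<mu>P cmpP cmp_r d_cmp by (auto simp: f_def)
    have kD: "K * fst m \<le> K * fst D" "K * snd m \<le> K * snd D" "K * fst n \<le> K * fst D" "K * snd n \<le> K * snd D"
      by (auto simp: D_def djoin_def)
    have Bl: "fst B \<le> fst (d \<mu>)" "snd B \<le> snd (d \<mu>)" using lm(2) by (auto simp: dle_def)
    have Bv: "fst B = fst D + K * fst D + a" "snd B = snd D + K * snd D" by (simp_all add: B_def dsc_def dadd_def)
    have dleD: "dle D (d f)" using Bl Bv df by (simp add: dle_def dadd_def)
    show "\<exists>f\<in>P. r f = v \<and> dle (djoin m n) (d f) \<and>
           seg P r s cmp d f m (dadd m (dsub (d f) (djoin m n)))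
           \<noteq> seg P r s cmp d f n (dadd n (dsub (d f) (djoin m n)))"
    proof (intro bexI conjI)
      show "f \<in> P" "r f = v" by (fact fP, fact rf)
      show "dle (djoin m n) (d f)" using dleD by (simp add: D_def)
      show "seg P r s cmp d f m (dadd m (dsub (d f) (djoin m n))) \<noteq> seg P r s cmp d f n (dadd n (dsub (d f) (djoin m n)))"
      proof
        assume eq: "seg P r s cmp d f m (dadd m (dsub (d f) (djoin m n))) = seg P r s cmp d f n (dadd n (dsub (d f) (djoin m n)))"
        have it: "seg P r s cmp d f (dadd (dsc K m) (d l)) (dadd (dsc K m) (dadd (d l) (a,0)))
           = seg P r s cmp d f (dadd (dsc K n) (d l)) (dadd (dsc K n) (dadd (d l) (a,0)))"
          apply (rule shift_iter[OF fP dleD[unfolded D_def] eq])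
          using Bl Bv df unfolding D_def apply (auto simp: dsimps dsc_def) by linarith+
        have L: "seg P r s cmp d f (dadd (dsc K x) (d l)) (dadd (dsc K x) (dadd (d l) (a,0)))
           = seg P r s cmp d \<mu> (a*(b*fst x), b*(a*snd x)) (a*(b*fst x)+a, b*(a*snd x))"
          if "K * fst x \<le> K * fst D" "K * snd x \<le> K * snd D" for x
        proof -
          have "seg P r s cmp d (cmp l \<mu>) (dadd (d l) (a*(b*fst x), b*(a*snd x))) (dadd (d l) (a*(b*fst x)+a, b*(a*snd x)))
             = seg P r s cmp d \<mu> (a*(b*fst x), b*(a*snd x)) (a*(b*fst x)+a, b*(a*snd x))"
          proof (rule seg_cmp)
            have t: "a*(b*fst x) \<le> a*(b*fst D)" "a*(b*snd x) \<le> a*(b*snd D)" using that by (simp_all add: K_def mult.assoc)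
            have c: "b*(a*snd x) = a*(b*snd x)" by simp
            have KK: "K * fst D = a*(b*fst D)" "K * snd D = a*(b*snd D)" by (simp_all add: K_def)
            have "a*(b*fst x)+a \<le> fst (d \<mu>)" using t Bl Bv KK by linarith
            moreover have "b*(a*snd x) \<le> snd (d \<mu>)" unfolding c using t Bl Bv KK by linarith
            ultimately show "dle (a*(b*fst x)+a, b*(a*snd x)) (d \<mu>)" by (simp add: dle_def)
          qed (use uV \<mu>P in auto)
          then show ?thesis unfolding f_def K_def pos_eq2 unfolding pos_eq .
        qed
        have "seg P r s cmp d \<mu> (a*(b*fst m), b*(a*snd m)) (a*(b*fst m)+a, b*(a*snd m))
           = seg P r s cmp d \<mu> (a*(b*fst n), b*(a*snd n)) (a*(b*fst n)+a, b*(a*snd n))"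
          using it L[of m] L[of n] kD by simp
        then show False using neq by simp
      qed
    qed
  qed
qed

end
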